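(* Fix $\hat\alpha\in(0,(b-a)^{-1/2})$, $\hat\beta=\hat\alpha(1-(b-a)\hat\alpha^2)$. For small $\varepsilon>0$ let $c=1+\frac12\varepsilon^2$, $\alpha=\varepsilon\hat\alpha$, and $\lambda=\frac12\varepsilon^3\Lambda$. Then for $j,k\in\{0,1\}$, $\big\|I_\varepsilon^{-1}\big(\varepsilon^{3-j}\partial^jS^{-k}B^{-1}(\lambda-Q_-)^{-1}\big)I_\varepsilon-2\partial^j(\Lambda-\partial+(b-a)\partial^3)^{-1}\big\|_{L^2_{\hat\alpha}\to L^2_{\hat\alpha}}\to0$ as $\varepsilon\to0$, uniformly for $\Lambda\in\mathbb C$ with $\operatorname{Re}\Lambda\ge-\hat\beta/2$.
   Context: Fix $0<a<b$, $B=I-b\partial^2$ ($\partial=\partial_x$). $L^2_\alpha=\{g:e^{\alpha x}g\in L^2(\mathbb R)\}$. Fourier multipliers act on $L^2_\alpha$ via symbols evaluated at $k+i\alpha$ (with $\hat g(k)=\int ge^{-ikx}dx$, $\partial$ has symbol $i\xi$). $S$ has symbol $\hat S(\xi)=\sqrt{(1+a\xi^2)/(1+b\xi^2)}$ (principal branch), $Q_-=c\partial-S\partial$ (symbol $i\xi c-i\xi\hat S(\xi)$). $(I_\varepsilon g)(x)=\sqrt\varepsilon\,g(\varepsilon x)$ is an isometry $L^2_{\hat\alpha}\to L^2_{\varepsilon\hat\alpha}$. *)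

theory Defs
  imports "HOL-Analysis.Analysis"
begin

text \<open>A function g in L2_alpha is represented by
  h(k) = ghat(k + i alpha) (k real), which by Plancherel is (up to the factor sqrt(2 pi),
  irrelevant for operator norms) an isometry of L2_alpha onto L2(R).
  A Fourier multiplier with symbol m then acts as multiplication by m(k + i alpha).\<close>

definition l2norm :: "(real \<Rightarrow> complex) \<Rightarrow> ennreal" where
  "l2norm h = (let I = (\<integral>\<^sup>+ x. ennreal ((cmod (h x))\<^sup>2) \<partial>lborel) in
      if I = \<infinity> then \<infinity> else ennreal (sqrt (enn2real I)))"

definition L2space :: "(real \<Rightarrow> complex) set" where
  "L2space = {h. h \<in> borel_measurable lborel \<and> l2norm h < \<infinity>}"

definition op_norm :: "((real \<Rightarrow> complex) \<Rightarrow> (real \<Rightarrow> complex)) \<Rightarrow> ennreal" where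
  "op_norm T = (SUP h \<in> {h \<in> L2space. l2norm h \<noteq> 0}. l2norm (T h) / l2norm h)"

definition mult_op :: "real \<Rightarrow> (complex \<Rightarrow> complex) \<Rightarrow> (real \<Rightarrow> complex) \<Rightarrow> (real \<Rightarrow> complex)" where
  "mult_op \<alpha> m h = (\<lambda>k. m (complex_of_real k + \<i> * complex_of_real \<alpha>) * h k)"

text \<open>(I_eps g)(x) = sqrt eps g(eps x), L2_ahat \<rightarrow> L2_(eps ahat), on the Fourier side:
  (I_eps g)^(k + i eps ahat) = eps^(-1/2) ghat((k + i eps ahat)/eps).\<close>
definition I_eps :: "real \<Rightarrow> (real \<Rightarrow> complex) \<Rightarrow> (real \<Rightarrow> complex)" where
  "I_eps \<epsilon> h = (\<lambda>k. h (k / \<epsilon>) / complex_of_real (sqrt \<epsilon>))"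

definition I_eps_inv :: "real \<Rightarrow> (real \<Rightarrow> complex) \<Rightarrow> (real \<Rightarrow> complex)" where
  "I_eps_inv \<epsilon> h = (\<lambda>k. complex_of_real (sqrt \<epsilon>) * h (\<epsilon> * k))"

text \<open>Symbols (d has symbol i xi).\<close>
definition S_sym :: "real \<Rightarrow> real \<Rightarrow> complex \<Rightarrow> complex" where
  "S_sym a b \<xi> = csqrt ((1 + of_real a * \<xi>\<^sup>2) / (1 + of_real b * \<xi>\<^sup>2))"

definition B_sym :: "real \<Rightarrow> complex \<Rightarrow> complex" where
  "B_sym b \<xi> = 1 - of_real b * (\<i> * \<xi>)\<^sup>2"

definition Qm_sym :: "real \<Rightarrow> real \<Rightarrow> real \<Rightarrow> complex \<Rightarrow> complex" where
  "Qm_sym a b c \<xi> = \<i> * \<xi> * of_real c - \<i> * \<xi> * S_sym a b \<xi>"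

text \<open>Symbol of eps^(3-j) d^j S^(-n) B^(-1) (lam - Q_-)^(-1).\<close>
definition lhs_sym :: "real \<Rightarrow> real \<Rightarrow> real \<Rightarrow> complex \<Rightarrow> real \<Rightarrow> nat \<Rightarrow> nat \<Rightarrow> complex \<Rightarrow> complex" where
  "lhs_sym a b c lam \<epsilon> j n \<xi> =
     of_real (\<epsilon> ^ (3 - j)) * (\<i> * \<xi>) ^ j * (inverse (S_sym a b \<xi>)) ^ n
     * inverse (B_sym b \<xi>) * inverse (lam - Qm_sym a b c \<xi>)"

text \<open>Symbol of 2 d^j (Lam - d + (b-a) d^3)^(-1).\<close>
definition lim_sym :: "real \<Rightarrow> real \<Rightarrow> complex \<Rightarrow> nat \<Rightarrow> complex \<Rightarrow> complex" where
  "lim_sym a b Lam j \<xi> =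
     2 * (\<i> * \<xi>) ^ j * inverse (Lam - \<i> * \<xi> + of_real (b - a) * (\<i> * \<xi>) ^ 3)"

end

theory Submission
  imports Defs
begin

lemma small_real:
  fixes \<epsilon> \<alpha>h c3 ss A CV CE Vn En Y1 Y2 r \<rho> :: real and j :: nat
  assumes e: "0<\<epsilon>" "0<\<alpha>h" "0<c3" "0<ss" "0\<le>Vn" "0\<le>En" "0\<le>r" "j\<le>1" "0\<le>\<rho>" "0 \<le> CV*A" "0 \<le> CE"
    and y1: "\<epsilon>*\<alpha>h*c3 * ss \<le> Y1" and y2: "\<epsilon>*\<alpha>h*c3 * ss \<le> Y2"
    and v: "Vn \<le> CV*A * ss" and en: "En \<le> CE*(A * ss)^2" and r2: "r \<le> 2" and rr: "r^2 \<le> 2*\<rho>"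
  shows "\<epsilon>^(3-j) * r^j * (Vn/Y1 + r*En/(Y1*Y2))
     \<le> (\<epsilon>^2 + 2*\<epsilon>) * (CV*A/(\<alpha>h*c3)) + (2*\<epsilon> + 2*\<rho>) * (CE*A^2/(\<alpha>h*c3)^2)"
proof -
  define Z where "Z = \<epsilon>*\<alpha>h*c3 * ss"
  define P1 where "P1 = CV*A/(\<alpha>h*c3)"
  define P2 where "P2 = CE*A^2/(\<alpha>h*c3)^2"
  have Z0: "Z > 0" using e by (simp add: Z_def)
  have P10: "P1 \<ge> 0" using e by (simp add: P1_def)
  have P20: "P2 \<ge> 0" using e by (simp add: P2_def)
  have t1: "Vn/Y1 \<le> CV*A * ss/Z"
    using e v y1 Z0 by (intro frac_le) (auto simp: Z_def)
  have t1': "CV*A * ss/Z = P1/\<epsilon>" using e by (simp add: Z_def P1_def field_simps)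
  have ZZ: "Z*Z \<le> Y1*Y2" using y1 y2 Z0 unfolding Z_def[symmetric] by (intro mult_mono) auto
  have t2: "r*En/(Y1*Y2) \<le> r*(CE*(A * ss)^2)/(Z*Z)"
    using e en ZZ Z0 by (intro frac_le mult_left_mono) (auto simp: mult_pos_pos)
  have t2': "r*(CE*(A * ss)^2)/(Z*Z) = r*P2/\<epsilon>^2" using e by (simp add: Z_def P2_def field_simps power2_eq_square)
  have T: "Vn/Y1 + r*En/(Y1*Y2) \<le> P1/\<epsilon> + r*P2/\<epsilon>^2" using t1 t1' t2 t2' by linarith
  show ?thesis
  proof (cases j)
    case 0
    have "\<epsilon>^(3-j) * r^j * (Vn/Y1 + r*En/(Y1*Y2)) \<le> \<epsilon>^3 * (P1/\<epsilon> + r*P2/\<epsilon>^2)"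
      using T e 0 by (simp add: mult_left_mono)
    also have "\<dots> = \<epsilon>^2 * P1 + \<epsilon> * r * P2" using e by (simp add: field_simps power2_eq_square power3_eq_cube)
    also have "\<dots> \<le> \<epsilon>^2 * P1 + \<epsilon> * 2 * P2"
      using r2 e P20 by (intro add_left_mono mult_right_mono mult_left_mono) auto
    also have "\<dots> \<le> (\<epsilon>^2 + 2*\<epsilon>) * P1 + (2*\<epsilon> + 2*\<rho>) * P2"
      using P10 P20 e by (simp add: algebra_simps)
    finally show ?thesis by (simp add: P1_def P2_def)
  next
    case (Suc m) hence j1: "j = 1" using e by simp
    have "\<epsilon>^(3-j) * r^j * (Vn/Y1 + r*En/(Y1*Y2)) \<le> \<epsilon>^2 * r * (P1/\<epsilon> + r*P2/\<epsilon>^2)"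
      using T e j1 by (simp add: mult_left_mono)
    also have "\<dots> = \<epsilon> * r * P1 + r^2 * P2" using e by (simp add: field_simps power2_eq_square)
    also have "\<dots> \<le> \<epsilon> * 2 * P1 + (2*\<rho>) * P2"
      using r2 rr e P10 P20 by (intro add_mono mult_right_mono mult_left_mono) auto
    also have "\<dots> \<le> (\<epsilon>^2 + 2*\<epsilon>) * P1 + (2*\<epsilon> + 2*\<rho>) * P2"
      using P10 P20 e by (simp add: algebra_simps)
    finally show ?thesis by (simp add: P1_def P2_def)
  qed
qed

lemma large_lhs:
  fixes \<epsilon> \<alpha>h \<kappa> Dn Y1 r C3 Sn SB :: real and j :: nat
  assumes e: "0<\<epsilon>" "0<\<alpha>h" "0<\<kappa>" "0\<le>r" "j\<le>1" "1/2 \<le> Dn" "r \<le> C3*Dn" "0 \<le> Sn" "Sn \<le> SB"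
    and y1: "\<epsilon>*\<alpha>h*\<kappa> \<le> Y1"
  shows "\<epsilon>^(3-j) * r^j * (Sn / (Dn * Y1)) \<le> (2*\<epsilon>^2 + C3*\<epsilon>) * (SB/(\<alpha>h*\<kappa>))"
proof -
  define P where "P = SB/(\<alpha>h*\<kappa>)"
  have Dn0: "Dn > 0" using e by linarith
  have SB0: "SB \<ge> 0" using e by linarith
  have P0: "P \<ge> 0" using e SB0 by (simp add: P_def)
  have C30: "C3 \<ge> 0"
  proof (rule ccontr)
    assume "\<not> C3 \<ge> 0" hence "C3*Dn < 0" using Dn0 by (simp add: mult_neg_pos)
    thus False using e by linarith
  qed
  have "Sn / (Dn * Y1) \<le> SB / (Dn * (\<epsilon>*\<alpha>h*\<kappa>))"
    using e y1 Dn0 SB0 by (intro frac_le mult_left_mono) (auto simp: mult_pos_pos)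
  also have "\<dots> = P / (\<epsilon> * Dn)" using e Dn0 by (simp add: P_def field_simps)
  finally have T: "Sn / (Dn * Y1) \<le> P / (\<epsilon> * Dn)" .
  show ?thesis
  proof (cases j)
    case 0
    have "\<epsilon>^(3-j) * r^j * (Sn / (Dn * Y1)) \<le> \<epsilon>^3 * (P / (\<epsilon> * Dn))"
      using mult_left_mono[OF T, of "\<epsilon>^3"] e 0 by simp
    also have "\<dots> = \<epsilon>^2 * P * (1/Dn)" using e Dn0 by (simp add: field_simps power2_eq_square power3_eq_cube)
    also have "\<dots> \<le> \<epsilon>^2 * P * 2"
    proof (rule mult_left_mono)
      show "1/Dn \<le> 2" using e Dn0 by (simp add: divide_le_eq)
    qed (use P0 in simp)
    also have "\<dots> \<le> (2*\<epsilon>^2 + C3*\<epsilon>) * P" using C30 P0 e by (simp add: algebra_simps)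
    finally show ?thesis by (simp add: P_def)
  next
    case (Suc m) hence j1: "j = 1" using e by simp
    have "\<epsilon>^(3-j) * r^j * (Sn / (Dn * Y1)) \<le> \<epsilon>^2 * r * (P / (\<epsilon> * Dn))"
      using mult_left_mono[OF T, of "\<epsilon>^2 * r"] e j1 by simp
    also have "\<dots> = \<epsilon> * P * (r / Dn)" using e Dn0 by (simp add: field_simps power2_eq_square)
    also have "\<dots> \<le> \<epsilon> * P * C3"
    proof (rule mult_left_mono)
      show "r / Dn \<le> C3" using e Dn0 by (simp add: divide_le_eq)
    qed (use P0 e in simp)
    also have "\<dots> \<le> (2*\<epsilon>^2 + C3*\<epsilon>) * P" using C30 P0 e by (simp add: algebra_simps)
    finally show ?thesis by (simp add: P_def)
  qed
qed

lemma large_lim: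
  fixes \<epsilon> \<alpha>h B Y2 r X \<rho> :: real and j :: nat
  assumes e: "0<\<epsilon>" "0<\<alpha>h" "0<B" "0<\<rho>" "\<rho> \<le> X" "0\<le>r" "r \<le> 1 + 2*X" "j\<le>1"
    and y2: "\<epsilon>*\<alpha>h*B*X \<le> Y2"
  shows "\<epsilon>^(3-j) * r^j / Y2 \<le> (\<epsilon>^2/\<rho> + \<epsilon>*(1/\<rho> + 2)) * (1/(\<alpha>h*B))"
proof -
  define P where "P = 1/(\<alpha>h*B)"
  have X0: "X > 0" using e by linarith
  have P0: "P > 0" using e by (simp add: P_def)
  have Z0: "\<epsilon>*\<alpha>h*B*X > 0" using e X0 by simp
  have iX: "1/X \<le> 1/\<rho>" using e by (intro divide_left_mono) auto
  show ?thesis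
  proof (cases j)
    case 0
    have "\<epsilon>^(3-j) * r^j / Y2 \<le> \<epsilon>^3 / (\<epsilon>*\<alpha>h*B*X)"
      using e y2 Z0 0 by (intro frac_le) auto
    also have "\<dots> = \<epsilon>^2 * P * (1/X)" using e X0 by (simp add: P_def field_simps power2_eq_square power3_eq_cube)
    also have "\<dots> \<le> \<epsilon>^2 * P * (1/\<rho>)" using iX P0 by (intro mult_left_mono) auto
    also have "\<dots> \<le> (\<epsilon>^2/\<rho> + \<epsilon>*(1/\<rho> + 2)) * P" using P0 e by (simp add: algebra_simps)
    finally show ?thesis by (simp add: P_def)
  next
    case (Suc m) hence j1: "j = 1" using e by simp
    have "\<epsilon>^(3-j) * r^j / Y2 \<le> \<epsilon>^2 * r / (\<epsilon>*\<alpha>h*B*X)"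
      using e y2 Z0 j1 by (intro frac_le) auto
    also have "\<dots> = \<epsilon> * P * (r/X)" using e X0 by (simp add: P_def field_simps power2_eq_square)
    also have "\<dots> \<le> \<epsilon> * P * (1/\<rho> + 2)"
    proof (rule mult_left_mono)
      have "r/X \<le> (1 + 2*X)/X" using e X0 by (intro divide_right_mono) auto
      also have "\<dots> = 1/X + 2" using X0 by (simp add: field_simps)
      finally show "r/X \<le> 1/\<rho> + 2" using iX by linarith
    qed (use P0 e in simp)
    also have "\<dots> \<le> (\<epsilon>^2/\<rho> + \<epsilon>*(1/\<rho> + 2)) * P" using P0 e by (simp add: algebra_simps)
    finally show ?thesis by (simp add: P_def)
  qed
qed


lemma S_facts:
  fixes S w :: complex
  assumes Sw: "S^2 = w" and RS: "Re S \<ge> 0" and Rw: "Re w > 0"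
  shows "Re S > 0" "(cmod S)^2 = cmod w" "2 * Re S * Im S = Im w"
    "cmod (1 - S) \<le> cmod (1 - w)" "Re S \<le> (3 + (cmod w)^2) / 4"
proof -
  have ReSq: "Re w = (Re S)^2 - (Im S)^2" and ImSq: "Im w = 2 * Re S * Im S"
    using Sw by (auto simp: power2_eq_square)
  show RSp: "Re S > 0"
  proof (rule ccontr)
    assume "\<not> Re S > 0" hence "Re S = 0" using RS by auto
    hence "Re w = - ((Im S)^2)" using ReSq by simp
    thus False using Rw zero_le_power2[of "Im S"] by linarith
  qed
  show nS: "(cmod S)^2 = cmod w" using Sw by (metis norm_power)
  show "2 * Re S * Im S = Im w" using ImSq by simp
  have "1 - w = (1 - S) * (1 + S)" using Sw by (simp add: power2_eq_square algebra_simps)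
  hence "cmod (1 - w) = cmod (1 - S) * cmod (1 + S)" by (simp add: norm_mult)
  moreover have "cmod (1 + S) \<ge> 1"
    using complex_Re_le_cmod[of "1 + S"] RS by simp
  ultimately show "cmod (1 - S) \<le> cmod (1 - w)"
    using mult_left_mono[of 1 "cmod (1 + S)" "cmod (1 - S)"] by simp
  have t: "cmod S \<le> (3 + (cmod S)^4) / 4"
  proof -
    have "(cmod S - 1)^2 * ((cmod S)^2 + 2 * cmod S + 3) \<ge> 0" by simp
    moreover have "(cmod S - 1)^2 * ((cmod S)^2 + 2 * cmod S + 3) = (cmod S)^4 - 4 * cmod S + 3"
      by algebra
    ultimately show ?thesis by simp
  qed
  have "(cmod S)^4 = (cmod w)^2" 
  proof -
    have "(cmod S)^4 = ((cmod S)^2)^2" by (simp flip: power_mult)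
    thus ?thesis using nS by simp
  qed
  thus "Re S \<le> (3 + (cmod w)^2) / 4" using t complex_Re_le_cmod[of S] by simp
qed

context
  fixes a b \<alpha>h \<epsilon> x :: real and \<Lambda> :: complex
  assumes a0: "0 < a" and ab: "a < b" and al0: "0 < \<alpha>h" and alb: "(b - a) * \<alpha>h^2 < 1"
    and e0: "0 < \<epsilon>"
    and sm1: "b * (\<epsilon>*\<alpha>h)^2 \<le> 1/4"
    and sm2: "32 * b * (b-a) * \<alpha>h^2 * (\<epsilon>*\<alpha>h)^2 \<le> 1 - (b-a)*\<alpha>h^2"
    and ReL: "Re \<Lambda> \<ge> - (\<alpha>h * (1 - (b - a) * \<alpha>h^2)) / 2"
begin

definition "k_eta = \<epsilon>*\<alpha>h"
definition "k_xi = Complex x k_eta"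
definition "k_u = k_xi^2"
definition "k_D = 1 + complex_of_real b * k_u"
definition "k_w = (1 + complex_of_real a * k_u) / k_D"
definition "k_S = csqrt k_w"
definition "k_c = 1 + \<epsilon>^2/2"
definition "k_lam = complex_of_real (\<epsilon>^3/2) * \<Lambda>"
definition "k_Q = \<i> * k_xi * complex_of_real k_c - \<i> * k_xi * k_S"
definition "k_T = complex_of_real (\<epsilon>^2) + complex_of_real (b-a) * k_u"
definition "k_Q0 = \<i> * k_xi * k_T / 2"
definition "k_E = complex_of_real k_c - k_S - k_T/2"
definition "k_m = (1 - (b-a)*\<alpha>h^2)/8"
definition "k_G = (b-a)*(2*x^2 + (a+b)*(cmod k_u)^2)/(4*(cmod k_D)^2)"

lemma eta_pos: "k_eta > 0" using e0 al0 by (simp add: k_eta_def)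
lemma bq: "b * k_eta^2 \<le> 1/4" using sm1 by (simp add: k_eta_def)
lemma Re_xi: "Re k_xi = x" and Im_xi: "Im k_xi = k_eta" by (simp_all add: k_xi_def)
lemma Re_u: "Re k_u = x^2 - k_eta^2" and Im_u: "Im k_u = 2*x*k_eta"
  by (simp_all add: k_u_def k_xi_def power2_eq_square)
lemma norm_xi2: "(cmod k_xi)^2 = x^2 + k_eta^2" by (simp add: k_xi_def cmod_power2)
lemma norm_u: "cmod k_u = x^2 + k_eta^2" using norm_xi2 by (simp add: k_u_def norm_power)
lemma Re_D: "Re k_D = 1 + b*(x^2 - k_eta^2)" by (simp add: k_D_def Re_u)
lemma Im_D: "Im k_D = b * (2*x*k_eta)" by (simp add: k_D_def Im_u)
lemma Re_D_ge: "Re k_D \<ge> 1 - b*k_eta^2"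
  using Re_D ab a0 by (simp add: algebra_simps)
lemma Re_D_ge2: "Re k_D \<ge> 3/4" using Re_D_ge bq by linarith
lemma norm_D_ge: "cmod k_D \<ge> 1/2" using Re_D_ge2 complex_Re_le_cmod[of k_D] by linarith
lemma D_nz: "k_D \<noteq> 0" using norm_D_ge by auto
lemma norm_D_le: "cmod k_D \<le> 1 + b * cmod k_u"
  unfolding k_D_def using norm_triangle_ineq[of 1 "complex_of_real b * k_u"] ab a0
  by (simp add: norm_mult)
lemma norm_D_ge3: "b * cmod k_u \<le> 3 * cmod k_D"
proof -
  have "cmod (complex_of_real b * k_u) \<le> cmod k_D + 1"
    using norm_triangle_ineq4[of k_D 1] unfolding k_D_def by simp
  thus ?thesis using norm_D_ge ab a0 by (simp add: norm_mult)
qed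

lemma normsq_lin: "(cmod (1 + complex_of_real t * k_u))^2 = 1 + 2*t*Re k_u + t^2 * (cmod k_u)^2"
  by (simp only: cmod_power2) (simp add: power2_eq_square algebra_simps)

lemma normsq_diff: "(cmod k_D)^2 - (cmod (1 + complex_of_real a * k_u))^2
    = (b-a) * (2 * Re k_u + (a+b) * (cmod k_u)^2)"
  unfolding k_D_def normsq_lin by (simp add: power2_eq_square algebra_simps)


lemma w_alt: "k_w = complex_of_real (a/b) + complex_of_real ((b-a)/b) * inverse k_D"
proof -
  have "a/b*b = a" using a0 ab by simp
  hence ab1: "complex_of_real (a/b) * complex_of_real b = complex_of_real a"
    by (metis of_real_mult)
  have "a/b + (b-a)/b = 1" using a0 ab by (simp add: diff_divide_distrib)
  hence ab2: "complex_of_real (a/b) + complex_of_real ((b-a)/b) = 1"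
    by (metis of_real_add of_real_1)
  have "(complex_of_real (a/b) + complex_of_real ((b-a)/b) * inverse k_D) * k_D
      = complex_of_real (a/b) * k_D + complex_of_real ((b-a)/b)"
    using D_nz by (simp add: algebra_simps)
  also have "\<dots> = complex_of_real (a/b) + complex_of_real ((b-a)/b) + complex_of_real (a/b) * complex_of_real b * k_u"
    unfolding k_D_def by (simp add: algebra_simps)
  also have "\<dots> = 1 + complex_of_real a * k_u" unfolding ab1 ab2 ..
  finally have "(complex_of_real (a/b) + complex_of_real ((b-a)/b) * inverse k_D) * k_D = 1 + complex_of_real a * k_u"
    (is "?X * _ = _") .
  hence "(1 + complex_of_real a * k_u) / k_D = ?X * k_D / k_D" by simp
  also have "\<dots> = ?X" using D_nz by (rule nonzero_mult_div_cancel_right)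
  finally show ?thesis unfolding k_w_def .
qed

lemma cmodD2: "(cmod k_D)^2 = (Re k_D)^2 + (Im k_D)^2" by (simp add: cmod_power2)

lemma Re_w: "Re k_w = a/b + ((b-a)/b) * Re k_D / (cmod k_D)^2"
  unfolding w_alt cmodD2 by simp

lemma Im_w: "Im k_w = - ((b-a) * (2*x*k_eta)) / (cmod k_D)^2"
  using ab a0 unfolding w_alt cmodD2 by (simp add: Im_D)

lemma Re_w_ge: "Re k_w \<ge> a/b"
proof -
  have "((b-a)/b) * Re k_D / (cmod k_D)^2 \<ge> 0" using ab a0 Re_D_ge2 by simp
  thus ?thesis using Re_w by simp
qed

lemma Re_w_pos: "Re k_w > 0"
proof -
  have "a/b > 0" using a0 ab by simp
  thus ?thesis using Re_w_ge by linarith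
qed

lemma norm_w_le: "cmod k_w \<le> 3"
proof -
  have "cmod k_w \<le> cmod (complex_of_real (a/b)) + cmod (complex_of_real ((b-a)/b) / k_D)"
    unfolding w_alt divide_inverse by (rule norm_triangle_ineq)
  also have "\<dots> = a/b + ((b-a)/b) / cmod k_D" using a0 ab by (simp add: norm_divide norm_mult norm_inverse divide_inverse del: of_real_diff of_real_divide)
  also have "\<dots> \<le> 1 + 1 * 2"
  proof (rule add_mono)
    show "a/b \<le> 1" using a0 ab by simp
    have "((b-a)/b) / cmod k_D \<le> ((b-a)/b) / (1/2)"
      using norm_D_ge a0 ab by (intro divide_left_mono) auto
    also have "\<dots> \<le> 1 * 2" using a0 ab by (simp add: divide_le_eq)
    finally show "((b-a)/b) / cmod k_D \<le> 1 * 2" .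
  qed
  finally show ?thesis by simp
qed

lemma one_minus_w: "1 - k_w = complex_of_real (b-a) * k_u / k_D"
proof -
  have "k_D - (1 + complex_of_real a * k_u) = complex_of_real (b-a) * k_u"
    by (simp add: k_D_def algebra_simps)
  moreover have "1 - (1 + complex_of_real a * k_u) / k_D = (k_D - (1 + complex_of_real a * k_u)) / k_D"
    using D_nz by (simp add: diff_divide_distrib)
  ultimately show ?thesis unfolding k_w_def by simp
qed

lemma norm_one_minus_w: "cmod (1 - k_w) \<le> 2 * (b-a) * cmod k_u"
proof -
  have "cmod (1 - k_w) = (b-a) * cmod k_u / cmod k_D" using ab
    by (simp add: one_minus_w norm_mult norm_divide del: of_real_diff)
  also have "\<dots> \<le> (b-a) * cmod k_u / (1/2)" using norm_D_ge ab
    by (intro divide_left_mono) auto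
  finally have "cmod (1 - k_w) \<le> (b-a) * cmod k_u * 2" by simp
  thus ?thesis by (simp add: algebra_simps)
qed

lemma Ssq: "k_S^2 = k_w" by (simp add: k_S_def)
lemmas SF = S_facts[OF Ssq _ Re_w_pos, unfolded k_S_def, OF Re_csqrt, folded k_S_def]

lemma norm_S_sq: "(cmod k_S)^2 = cmod k_w" using SF(2) .

lemma norm_S_ge: "cmod k_S \<ge> a/b"
proof -
  have h1: "(cmod k_S)^2 \<ge> a/b" using norm_S_sq Re_w_ge complex_Re_le_cmod[of k_w] by linarith
  have h2: "a/b \<le> 1" using a0 ab by simp
  show ?thesis
  proof (cases "cmod k_S \<le> 1")
    case True
    hence "(cmod k_S)^2 \<le> cmod k_S" by (simp add: power2_eq_square mult_left_le)
    thus ?thesis using h1 by linarith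
  next
    case False thus ?thesis using h2 by linarith
  qed
qed

lemma norm_S_le: "cmod k_S \<le> 2"
proof -
  have "(cmod k_S)^2 \<le> 2^2" using norm_S_sq norm_w_le by simp
  thus ?thesis by (rule power2_le_imp_le) simp
qed

lemma S_nz: "k_S \<noteq> 0"
proof -
  have "a/b > 0" using a0 ab by simp
  hence "cmod k_S > 0" using norm_S_ge by linarith
  thus ?thesis by auto
qed


lemma Re_S_pos: "Re k_S > 0" using SF(1) .

lemma Re_Q: "Re k_Q = - k_eta * k_c + x * Im k_S + k_eta * Re k_S"
  by (simp add: k_Q_def Re_xi Im_xi algebra_simps)

lemma x_ImS: "x * Im k_S \<le> 0"
proof -
  have "2 * Re k_S * (x * Im k_S) = x * Im k_w" using SF(3) by (simp add: algebra_simps)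
  also have "\<dots> = - ((b-a) * (2*x^2*k_eta)) / (cmod k_D)^2"
    by (simp add: Im_w power2_eq_square algebra_simps)
  also have "\<dots> \<le> 0" using ab eta_pos by (simp add: divide_nonpos_pos)
  finally have "2 * Re k_S * (x * Im k_S) \<le> 0" .
  thus ?thesis using Re_S_pos by (simp add: mult_le_0_iff)
qed

lemma norm_w_sq: "(cmod k_w)^2 = (cmod (1 + complex_of_real a * k_u))^2 / (cmod k_D)^2"
  by (simp add: k_w_def norm_divide power_divide)

lemma D2_pos: "(cmod k_D)^2 > 0" using D_nz by simp

lemma c_minus: "k_c - (3 + (cmod k_w)^2)/4
   = \<epsilon>^2/2 - (b-a)*k_eta^2/(2*(cmod k_D)^2) + k_G"
proof -
  have "k_c - (3 + (cmod k_w)^2)/4 = \<epsilon>^2/2 + ((cmod k_D)^2 - (cmod (1 + complex_of_real a * k_u))^2) / (4*(cmod k_D)^2)"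
    using D2_pos unfolding norm_w_sq k_c_def by (simp add: field_simps)
  also have "\<dots> = \<epsilon>^2/2 + (b-a) * (2 * (x^2 - k_eta^2) + (a+b) * (cmod k_u)^2) / (4*(cmod k_D)^2)"
    unfolding normsq_diff Re_u ..
  also have "\<dots> = \<epsilon>^2/2 - (b-a)*k_eta^2/(2*(cmod k_D)^2) + k_G"
    unfolding k_G_def using D2_pos by (simp add: field_simps)
  finally show ?thesis .
qed

lemma invD2: "1 / (cmod k_D)^2 \<le> 1 + 8 * b * k_eta^2"
proof -
  define t where "t = b * k_eta^2"
  have t0: "0 \<le> t" using ab a0 by (simp add: t_def)
  have t1: "t \<le> 1/4" using bq by (simp add: t_def)
  have "1 - t \<le> cmod k_D" using Re_D_ge complex_Re_le_cmod[of k_D] by (simp add: t_def)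
  hence "(1 - t)^2 \<le> (cmod k_D)^2" using t1 by (intro power_mono) auto
  moreover have "1 \<le> (1-t)^2 * (1 + 8*t)"
  proof -
    have "(1-t)^2 * (1 + 8*t) = 1 + t * (6 - 15*t + 8*t^2)" by (simp add: power2_eq_square algebra_simps)
    moreover have "6 - 15*t + 8*t^2 \<ge> 0" using t0 t1 zero_le_power2[of t] by linarith
    ultimately show ?thesis using t0 by simp
  qed
  ultimately have "1 \<le> (cmod k_D)^2 * (1 + 8*t)" using t0
    by (smt (verit) mult_right_mono)
  hence h: "1 \<le> (cmod k_D)^2 * (1 + 8*b*k_eta^2)" by (simp add: t_def algebra_simps)
  show ?thesis unfolding pos_divide_le_eq[OF D2_pos] using h by (simp only: mult.commute)
qed

lemma G_nonneg: "k_G \<ge> 0" using ab a0 by (simp add: k_G_def)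

lemma Re_mQ: "Re (- k_Q) \<ge> k_eta * (\<epsilon>^2/2 - (b-a)*k_eta^2*(1 + 8*b*k_eta^2)/2 + k_G)"
proof -
  have "Re (- k_Q) \<ge> k_eta * (k_c - Re k_S)" using Re_Q x_ImS by (simp add: algebra_simps)
  also have "k_eta * (k_c - Re k_S) \<ge> k_eta * (k_c - (3 + (cmod k_w)^2)/4)"
    using SF(5) eta_pos by (intro mult_left_mono) auto
  also have "k_c - (3 + (cmod k_w)^2)/4 \<ge> \<epsilon>^2/2 - (b-a)*k_eta^2*(1 + 8*b*k_eta^2)/2 + k_G"
  proof -
    have "(b-a)*k_eta^2 * (1 / (cmod k_D)^2) \<le> (b-a)*k_eta^2 * (1 + 8*b*k_eta^2)"
      using invD2 ab by (intro mult_left_mono) auto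
    thus ?thesis unfolding c_minus by simp
  qed
  hence "k_eta * (k_c - (3 + (cmod k_w)^2)/4) \<ge> k_eta * (\<epsilon>^2/2 - (b-a)*k_eta^2*(1 + 8*b*k_eta^2)/2 + k_G)"
    using eta_pos by (intro mult_left_mono) auto
  finally show ?thesis by linarith
qed


lemma Re_lam: "Re k_lam \<ge> - (k_eta * \<epsilon>^2 * (1 - (b-a)*\<alpha>h^2)) / 4"
proof -
  have "- (k_eta * \<epsilon>^2 * (1 - (b-a)*\<alpha>h^2)) / 4 = \<epsilon>^3/2 * (- (\<alpha>h * (1 - (b - a) * \<alpha>h^2)) / 2)"
    unfolding k_eta_def by (simp add: power3_eq_cube power2_eq_square field_simps)
  also have "\<dots> \<le> \<epsilon>^3/2 * Re \<Lambda>"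
    using ReL e0 by (intro mult_left_mono) auto
  also have "\<dots> = Re k_lam" by (simp add: k_lam_def)
  finally show ?thesis .
qed

lemma Re_lamQ: "Re (k_lam - k_Q) \<ge> k_eta * (\<epsilon>^2 * k_m + k_G)"
proof -
  define kk where "kk = (b-a)*\<alpha>h^2"
  define P where "P = b*(b-a)*\<alpha>h^2*k_eta^2"
  have h1: "Re (k_lam - k_Q) \<ge> - (k_eta * \<epsilon>^2 * (1 - kk)) / 4
      + k_eta * (\<epsilon>^2/2 - (b-a)*k_eta^2*(1 + 8*b*k_eta^2)/2 + k_G)"
    using Re_lam Re_mQ unfolding kk_def by simp
  have h3: "32 * P \<le> 1 - kk"
    using sm2 unfolding kk_def k_eta_def P_def by (simp add: algebra_simps)
  have key: "- (k_eta * \<epsilon>^2 * (1 - kk)) / 4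
      + k_eta * (\<epsilon>^2/2 - (b-a)*k_eta^2*(1 + 8*b*k_eta^2)/2 + k_G)
      = k_eta * (\<epsilon>^2 * k_m + k_G) + k_eta * \<epsilon>^2 * ((1 - kk) - 32 * P) / 8"
    unfolding kk_def P_def k_m_def k_eta_def by (simp add: field_simps power2_eq_square)
  have "k_eta * \<epsilon>^2 * ((1 - kk) - 32 * P) / 8 \<ge> 0" using h3 eta_pos by simp
  thus ?thesis using h1 key by linarith
qed

lemma Re_Q0: "Re (- k_Q0) = k_eta * (\<epsilon>^2 + 3*(b-a)*x^2 - (b-a)*k_eta^2) / 2"
  by (simp add: k_Q0_def k_T_def Re_xi Im_xi Re_u Im_u power2_eq_square field_simps)

lemma Re_lamQ0: "Re (k_lam - k_Q0) \<ge> k_eta * (2 * k_m * \<epsilon>^2 + 3/2 * (b-a) * x^2)"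
proof -
  have "Re (k_lam - k_Q0) = Re k_lam + Re (- k_Q0)" by simp
  hence "Re (k_lam - k_Q0) \<ge> - (k_eta * \<epsilon>^2 * (1 - (b-a)*\<alpha>h^2)) / 4
     + k_eta * (\<epsilon>^2 + 3*(b-a)*x^2 - (b-a)*k_eta^2) / 2" using Re_lam Re_Q0 by linarith
  moreover have "- (k_eta * \<epsilon>^2 * (1 - (b-a)*\<alpha>h^2)) / 4
     + k_eta * (\<epsilon>^2 + 3*(b-a)*x^2 - (b-a)*k_eta^2) / 2 = k_eta * (2 * k_m * \<epsilon>^2 + 3/2 * (b-a) * x^2)"
    unfolding k_m_def k_eta_def by (simp add: field_simps power2_eq_square)
  ultimately show ?thesis by simp
qed


lemma cS_norm: "cmod (complex_of_real k_c + k_S) \<ge> 1"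
proof -
  have "Re (complex_of_real k_c + k_S) \<ge> 1" using Re_S_pos by (simp add: k_c_def)
  thus ?thesis using complex_Re_le_cmod by (meson order.trans)
qed

lemma E_eq: "k_E * (complex_of_real k_c + k_S)
   = complex_of_real (\<epsilon>^4/4) - complex_of_real ((b-a)*b) * k_u^2 / k_D
     + k_T * ((1 - k_S) - complex_of_real (\<epsilon>^2/2)) / 2"
proof -
  define X where "X = complex_of_real (b-a) * k_u / k_D"
  have bu: "complex_of_real b * k_u = k_D - 1" by (simp add: k_D_def)
  have u2D: "complex_of_real ((b-a)*b) * k_u^2 / k_D = complex_of_real (b-a) * k_u - X"
  proof -
    have "complex_of_real ((b-a)*b) * k_u^2 = complex_of_real (b-a) * k_u * (complex_of_real b * k_u)"
      unfolding of_real_mult by (simp add: power2_eq_square mult_ac)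
    also have "\<dots> = complex_of_real (b-a) * k_u * (k_D - 1)" unfolding bu ..
    finally show ?thesis unfolding X_def using D_nz by (simp add: field_simps)
  qed
  have "k_E * (complex_of_real k_c + k_S) = (complex_of_real k_c)^2 - k_S^2 - k_T*(complex_of_real k_c + k_S)/2"
    unfolding k_E_def by (simp add: algebra_simps power2_eq_square)
  also have "\<dots> = (complex_of_real k_c)^2 - (1 - X) - k_T*(complex_of_real k_c + k_S)/2"
    unfolding Ssq X_def one_minus_w[symmetric] by simp
  also have "\<dots> = complex_of_real (\<epsilon>^4/4) - (complex_of_real (b-a) * k_u - X)
     + k_T * ((1 - k_S) - complex_of_real (\<epsilon>^2/2)) / 2"
    unfolding k_T_def k_c_def
    by (simp add: field_simps power2_eq_square power4_eq_xxxx del: of_real_diff)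
  finally show ?thesis unfolding u2D .
qed

lemma norm_T: "cmod k_T \<le> \<epsilon>^2 + (b-a) * cmod k_u"
proof -
  have "cmod k_T \<le> cmod (complex_of_real (\<epsilon>^2)) + cmod (complex_of_real (b-a) * k_u)"
    unfolding k_T_def by (rule norm_triangle_ineq)
  thus ?thesis using ab by (simp add: norm_mult del: of_real_diff of_real_power)
qed

lemma norm_u2D: "cmod (complex_of_real ((b-a)*b) * k_u^2 / k_D) \<le> 2 * ((b-a)*b) * (cmod k_u)^2"
proof -
  have "cmod (complex_of_real ((b-a)*b) * k_u^2 / k_D) = ((b-a)*b) * (cmod k_u)^2 / cmod k_D"
    using ab a0 by (simp add: norm_mult norm_divide norm_power del: of_real_mult of_real_diff)
  also have "\<dots> \<le> ((b-a)*b) * (cmod k_u)^2 / (1/2)"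
    using norm_D_ge ab a0 by (intro divide_left_mono) auto
  finally show ?thesis by simp
qed

lemma norm_E: "cmod k_E \<le> 4 * (1+b)^2 * (\<epsilon>^2 + cmod k_u)^2"
proof -
  define U where "U = cmod k_u"
  define e2 where "e2 = \<epsilon>^2"
  have U0: "U \<ge> 0" and e20: "e2 \<ge> 0" by (simp_all add: U_def e2_def)
  have "cmod k_E \<le> cmod k_E * cmod (complex_of_real k_c + k_S)"
    using cS_norm mult_left_mono[of 1 "cmod (complex_of_real k_c + k_S)" "cmod k_E"] by simp
  also have "\<dots> = cmod (k_E * (complex_of_real k_c + k_S))" by (simp add: norm_mult)
  also have "\<dots> \<le> cmod (complex_of_real (\<epsilon>^4/4)) + cmod (complex_of_real ((b-a)*b) * k_u^2 / k_D)
     + cmod (k_T * ((1 - k_S) - complex_of_real (\<epsilon>^2/2)) / 2)"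
    unfolding E_eq by (rule order.trans[OF norm_triangle_ineq norm_triangle_ineq4[THEN add_right_mono]])
  also have "\<dots> \<le> e2^2/4 + 2 * ((b-a)*b) * U^2 + (e2 + (b-a)*U) * (2*(b-a)*U + e2/2) / 2"
  proof (intro add_mono)
    show "cmod (complex_of_real (\<epsilon>^4/4)) \<le> e2^2/4"
    proof -
      have "\<epsilon>^4/4 \<ge> 0" by simp
      hence "cmod (complex_of_real (\<epsilon>^4/4)) = \<epsilon>^4/4" by (simp only: norm_of_real abs_of_nonneg)
      moreover have "e2^2 = \<epsilon>^4" by (simp add: e2_def flip: power_mult)
      ultimately show ?thesis by simp
    qed
    show "cmod (complex_of_real ((b-a)*b) * k_u^2 / k_D) \<le> 2 * ((b-a)*b) * U^2" using norm_u2D by (simp add: U_def)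
    have "cmod ((1 - k_S) - complex_of_real (\<epsilon>^2/2)) \<le> cmod (1 - k_S) + cmod (complex_of_real (\<epsilon>^2/2))"
      by (rule norm_triangle_ineq4)
    also have "\<dots> \<le> 2*(b-a)*U + e2/2"
      using SF(4) norm_one_minus_w by (simp add: U_def e2_def norm_power)
    finally have h1: "cmod ((1 - k_S) - complex_of_real (\<epsilon>^2/2)) \<le> 2*(b-a)*U + e2/2" .
    have h2: "cmod k_T \<le> e2 + (b-a)*U" using norm_T by (simp add: U_def e2_def)
    have "cmod k_T * cmod ((1 - k_S) - complex_of_real (\<epsilon>^2/2)) \<le> (e2 + (b-a)*U) * (2*(b-a)*U + e2/2)"
      using h1 h2 by (intro mult_mono) (auto intro: order.trans[OF norm_ge_zero])
    thus "cmod (k_T * ((1 - k_S) - complex_of_real (\<epsilon>^2/2)) / 2) \<le> (e2 + (b-a)*U) * (2*(b-a)*U + e2/2) / 2"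
      by (simp add: norm_mult norm_divide)
  qed
  also have "\<dots> \<le> 4 * (1+b)^2 * (e2 + U)^2"
  proof -
    have ba: "b - a \<le> b" "0 \<le> b - a" "0 \<le> b" using a0 ab by auto
    have A: "e2^2/4 \<le> (1+b)^2 * (e2 + U)^2"
    proof -
      have "e2^2/4 \<le> (e2+U)^2" using U0 e20 by (simp add: power2_eq_square algebra_simps)
      also have "\<dots> \<le> (1+b)^2 * (e2+U)^2"
      proof -
        have "1 * 1 \<le> (1+b) * (1+b)" using ba by (intro mult_mono) auto
        hence "1 \<le> (1+b)^2" by (simp add: power2_eq_square)
        from mult_right_mono[OF this, of "(e2+U)^2"] show ?thesis by simp
      qed
      finally show ?thesis .
    qed
    have B: "2 * ((b-a)*b) * U^2 \<le> 2 * ((1+b)^2 * (e2 + U)^2)"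
    proof -
      have "(b-a)*b \<le> (1+b)^2" using ba by (simp add: power2_eq_square algebra_simps mult_right_mono)
      moreover have "U^2 \<le> (e2+U)^2" using U0 e20 by (intro power_mono) auto
      ultimately have "((b-a)*b) * U^2 \<le> (1+b)^2 * (e2 + U)^2"
        using ba by (intro mult_mono) auto
      thus ?thesis by simp
    qed
    have C: "(e2 + (b-a)*U) * (2*(b-a)*U + e2/2) / 2 \<le> (1+b)^2 * (e2 + U)^2"
    proof -
      have c1: "e2 + (b-a)*U \<le> (1+b) * (e2+U)" using ba U0 e20
        by (simp add: algebra_simps mult_right_mono add_increasing)
      have c2: "2*(b-a)*U + e2/2 \<le> 2 * ((1+b) * (e2+U))" using ba U0 e20
        by (simp add: algebra_simps mult_right_mono add_increasing)
      have "(e2 + (b-a)*U) * (2*(b-a)*U + e2/2) \<le> ((1+b) * (e2+U)) * (2 * ((1+b) * (e2+U)))"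
        using c1 c2 ba U0 e20 by (intro mult_mono) auto
      thus ?thesis by (simp add: power2_eq_square algebra_simps)
    qed
    show ?thesis using A B C by simp
  qed
  finally show ?thesis by (simp add: U_def e2_def)
qed


lemma norm_Sinv: "n \<le> 1 \<Longrightarrow> cmod ((inverse k_S)^n) \<le> b/a"
proof -
  assume n: "n \<le> 1"
  have ba1: "1 \<le> b/a" using a0 ab by simp
  show ?thesis
  proof (cases n)
    case 0 thus ?thesis using ba1 by simp
  next
    case (Suc m) hence n1: "n = 1" using n by simp
    have "cmod (inverse k_S) = 1 / cmod k_S" by (simp add: norm_inverse divide_inverse)
    also have "\<dots> \<le> 1 / (a/b)" using norm_S_ge a0 ab S_nz by (intro divide_left_mono) (auto intro: mult_pos_pos)
    finally show ?thesis using n1 by simp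
  qed
qed

lemma V_bound: "n \<le> 1 \<Longrightarrow> cmod ((inverse k_S)^n * inverse k_D - 1) \<le> 8*b^2/a * cmod k_u"
proof -
  assume n: "n \<le> 1"
  have U0: "cmod k_u \<ge> 0" by simp
  have ba1: "1 \<le> b/a" using a0 ab by simp
  have oD: "cmod (1 - k_D) = b * cmod k_u" using ab a0 by (simp add: k_D_def norm_mult)
  have D0: "cmod (inverse k_D - 1) \<le> 2*b * cmod k_u"
  proof -
    have "inverse k_D - 1 = (1 - k_D) / k_D" using D_nz by (simp add: field_simps)
    hence "cmod (inverse k_D - 1) = b * cmod k_u / cmod k_D" by (simp add: norm_divide oD)
    also have "\<dots> \<le> b * cmod k_u / (1/2)" using norm_D_ge ab a0 by (intro divide_left_mono) auto
    finally show ?thesis by simp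
  qed
  show ?thesis
  proof (cases n)
    case 0
    have "2*b * cmod k_u \<le> 8*b^2/a * cmod k_u"
    proof (rule mult_right_mono[OF _ U0])
      have "2*b*1 \<le> 8*b*(b/a)" using ba1 ab a0 by (intro mult_mono) auto
      thus "2*b \<le> 8*b^2/a" by (simp add: power2_eq_square)
    qed
    thus ?thesis using D0 0 by simp
  next
    case (Suc m) hence n1: "n = 1" using n by simp
    have e: "inverse k_S * inverse k_D - 1 = ((1 - k_S) - k_S * (k_D - 1)) / (k_S * k_D)"
      using D_nz S_nz by (simp add: field_simps)
    have num: "cmod ((1 - k_S) - k_S * (k_D - 1)) \<le> 4*b * cmod k_u"
    proof -
      have "cmod ((1 - k_S) - k_S * (k_D - 1)) \<le> cmod (1 - k_S) + cmod k_S * cmod (k_D - 1)"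
        using norm_triangle_ineq4[of "1 - k_S" "k_S * (k_D - 1)"] by (simp add: norm_mult)
      also have "\<dots> \<le> 2*(b-a)*cmod k_u + 2 * (b * cmod k_u)"
      proof (rule add_mono)
        show "cmod (1 - k_S) \<le> 2*(b-a)*cmod k_u" using SF(4) norm_one_minus_w by linarith
        have "cmod (k_D - 1) = b * cmod k_u" using oD by (simp add: norm_minus_commute)
        thus "cmod k_S * cmod (k_D - 1) \<le> 2 * (b * cmod k_u)" using norm_S_le
          mult_right_mono[OF norm_S_le, of "b * cmod k_u"] ab a0 by simp
      qed
      also have "\<dots> \<le> 4*b * cmod k_u" using a0 ab U0 by (simp add: algebra_simps)
      finally show ?thesis .
    qed
    have den: "cmod (k_S * k_D) \<ge> (a/b) * (1/2)" unfolding norm_mult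
      using norm_S_ge norm_D_ge a0 ab by (intro mult_mono) auto
    have "cmod (inverse k_S * inverse k_D - 1) \<le> 4*b * cmod k_u / ((a/b) * (1/2))"
      unfolding e norm_divide using num den a0 ab by (intro frac_le) auto
    also have "\<dots> = 8*b^2/a * cmod k_u" using a0 by (simp add: power2_eq_square field_simps)
    finally show ?thesis using n1 by simp
  qed
qed

lemma xi_le: "cmod k_xi \<le> (2 + 3/b) * cmod k_D"
proof -
  have "cmod k_xi \<le> 1 + (cmod k_xi)^2"
  proof -
    have h: "(cmod k_xi - 1/2)^2 = (cmod k_xi)^2 - cmod k_xi + 1/4" by (simp add: power2_eq_square field_simps)
    show ?thesis using h zero_le_power2[of "cmod k_xi - 1/2"] by linarith
  qed
  also have "(cmod k_xi)^2 = cmod k_u" by (simp add: k_u_def norm_power)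
  also have "1 + cmod k_u \<le> 2 * cmod k_D + 3/b * cmod k_D"
  proof (rule add_mono)
    show "1 \<le> 2 * cmod k_D" using norm_D_ge by simp
    show "cmod k_u \<le> 3/b * cmod k_D" using norm_D_ge3 a0 ab by (simp add: field_simps)
  qed
  finally show ?thesis by (simp add: algebra_simps)
qed

lemma Q_diff: "k_Q - k_Q0 = \<i> * k_xi * k_E"
  by (simp add: k_Q_def k_Q0_def k_E_def algebra_simps)


lemma S_sym_eq: "S_sym a b k_xi = k_S"
  by (simp add: S_sym_def k_S_def k_w_def k_D_def k_u_def)
lemma B_sym_eq: "B_sym b k_xi = k_D"
  by (simp add: B_sym_def k_D_def k_u_def power_mult_distrib)
lemma Qm_sym_eq: "Qm_sym a b k_c k_xi = k_Q"
  by (simp add: Qm_sym_def k_Q_def S_sym_eq)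

lemma lhs_eq: "lhs_sym a b k_c k_lam \<epsilon> j n k_xi
   = complex_of_real (\<epsilon>^(3-j)) * (\<i>*k_xi)^j * ((inverse k_S)^n * inverse k_D) * inverse (k_lam - k_Q)"
  by (simp add: lhs_sym_def S_sym_eq B_sym_eq Qm_sym_eq mult.assoc)

lemma m_pos: "k_m > 0" using alb by (simp add: k_m_def)

lemma Y1_pos: "Re (k_lam - k_Q) > 0"
proof -
  have "k_eta * (\<epsilon>^2 * k_m + k_G) > 0"
    using eta_pos m_pos G_nonneg e0 by (intro mult_pos_pos add_pos_nonneg) auto
  thus ?thesis using Re_lamQ by linarith
qed

lemma Y2_pos: "Re (k_lam - k_Q0) > 0"
proof -
  have "k_eta * (2 * k_m * \<epsilon>^2 + 3/2 * (b-a) * x^2) > 0"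
    using eta_pos m_pos e0 ab by (intro mult_pos_pos add_pos_nonneg) auto
  thus ?thesis using Re_lamQ0 by linarith
qed

lemma lim_eq: "j \<le> 1 \<Longrightarrow> lim_sym a b \<Lambda> j (k_xi / complex_of_real \<epsilon>)
   = complex_of_real (\<epsilon>^(3-j)) * (\<i>*k_xi)^j * inverse (k_lam - k_Q0)"
proof -
  assume j: "j \<le> 1"
  have en: "complex_of_real \<epsilon> \<noteq> 0" using e0 by simp
  have key: "\<Lambda> - \<i> * (k_xi / complex_of_real \<epsilon>) + complex_of_real (b - a) * (\<i> * (k_xi / complex_of_real \<epsilon>))^3
      = complex_of_real (2/\<epsilon>^3) * (k_lam - k_Q0)"
    using en unfolding k_lam_def k_Q0_def k_T_def k_u_def
    by (simp add: field_simps power2_eq_square power3_eq_cube)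
  have "lim_sym a b \<Lambda> j (k_xi / complex_of_real \<epsilon>)
     = 2 * (\<i> * (k_xi / complex_of_real \<epsilon>))^j * (complex_of_real (\<epsilon>^3/2) * inverse (k_lam - k_Q0))"
  proof -
    have inv: "inverse (complex_of_real (2/\<epsilon>^3) * (k_lam - k_Q0)) = complex_of_real (\<epsilon>^3/2) * inverse (k_lam - k_Q0)"
      by (simp only: inverse_mult_distrib of_real_inverse[symmetric] inverse_divide)
    show ?thesis unfolding lim_sym_def key inv by (simp only: mult.assoc)
  qed
  also have "\<dots> = complex_of_real (\<epsilon>^(3-j)) * (\<i>*k_xi)^j * inverse (k_lam - k_Q0)"
  proof (cases j)
    case 0 thus ?thesis by simp
  next
    case (Suc m) hence j1: "j = 1" using j by simp
    have h: "2 * (\<i> * (k_xi / complex_of_real \<epsilon>)) * (complex_of_real (\<epsilon>^3/2) * Z)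
       = complex_of_real (\<epsilon>^2) * (\<i>*k_xi) * Z" for Z
      using en by (simp add: field_simps power2_eq_square power3_eq_cube)
    show ?thesis using j1 h by simp
  qed
  finally show ?thesis .
qed

lemma norm_inv_le: "Re z > 0 \<Longrightarrow> cmod (inverse z) \<le> 1 / Re z"
proof -
  assume "Re z > 0"
  moreover have "Re z \<le> cmod z" by (rule complex_Re_le_cmod)
  ultimately show ?thesis by (simp add: norm_inverse divide_inverse le_imp_inverse_le)
qed

lemma diff_bound: "n \<le> 1 \<Longrightarrow> j \<le> 1 \<Longrightarrow>
  cmod (lhs_sym a b k_c k_lam \<epsilon> j n k_xi - lim_sym a b \<Lambda> j (k_xi / complex_of_real \<epsilon>))
  \<le> \<epsilon>^(3-j) * (cmod k_xi)^j * (cmod ((inverse k_S)^n * inverse k_D - 1) / Re (k_lam - k_Q)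
      + cmod k_xi * cmod k_E / (Re (k_lam - k_Q) * Re (k_lam - k_Q0)))"
proof -
  assume n: "n \<le> 1" and j: "j \<le> 1"
  define V where "V = (inverse k_S)^n * inverse k_D"
  define I1 where "I1 = inverse (k_lam - k_Q)"
  define I2 where "I2 = inverse (k_lam - k_Q0)"
  have nz1: "k_lam - k_Q \<noteq> 0" using Y1_pos by auto
  have nz2: "k_lam - k_Q0 \<noteq> 0" using Y2_pos by auto
  have dec: "V * I1 - I2 = (V - 1) * I1 + \<i> * k_xi * k_E * I1 * I2"
  proof -
    have "I1 - I2 = (k_Q - k_Q0) * I1 * I2" unfolding I1_def I2_def using nz1 nz2
      by (simp add: field_simps)
    thus ?thesis unfolding Q_diff by (simp add: algebra_simps)
  qed
  have "lhs_sym a b k_c k_lam \<epsilon> j n k_xi - lim_sym a b \<Lambda> j (k_xi / complex_of_real \<epsilon>)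
    = complex_of_real (\<epsilon>^(3-j)) * (\<i>*k_xi)^j * (V * I1 - I2)"
    unfolding lhs_eq lim_eq[OF j] V_def I1_def I2_def by (simp add: algebra_simps)
  also have "\<dots> = complex_of_real (\<epsilon>^(3-j)) * (\<i>*k_xi)^j * ((V - 1) * I1 + \<i> * k_xi * k_E * I1 * I2)"
    unfolding dec ..
  finally have eq: "cmod (lhs_sym a b k_c k_lam \<epsilon> j n k_xi - lim_sym a b \<Lambda> j (k_xi / complex_of_real \<epsilon>))
      = \<epsilon>^(3-j) * (cmod k_xi)^j * cmod ((V - 1) * I1 + \<i> * k_xi * k_E * I1 * I2)"
    using e0 by (simp add: norm_mult norm_power)
  have i1: "cmod I1 \<le> 1 / Re (k_lam - k_Q)" unfolding I1_def by (rule norm_inv_le[OF Y1_pos])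
  have i2: "cmod I2 \<le> 1 / Re (k_lam - k_Q0)" unfolding I2_def by (rule norm_inv_le[OF Y2_pos])
  have "cmod ((V - 1) * I1 + \<i> * k_xi * k_E * I1 * I2) \<le> cmod (V - 1) * cmod I1 + cmod k_xi * cmod k_E * cmod I1 * cmod I2"
    using norm_triangle_ineq[of "(V - 1) * I1" "\<i> * k_xi * k_E * I1 * I2"] by (simp add: norm_mult)
  also have "\<dots> \<le> cmod (V - 1) * (1 / Re (k_lam - k_Q)) + cmod k_xi * cmod k_E * (1 / Re (k_lam - k_Q)) * (1 / Re (k_lam - k_Q0))"
    using i1 i2 Y1_pos Y2_pos by (intro add_mono mult_mono mult_left_mono) auto
  also have "\<dots> = cmod (V - 1) / Re (k_lam - k_Q) + cmod k_xi * cmod k_E / (Re (k_lam - k_Q) * Re (k_lam - k_Q0))"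
    by simp
  finally have "cmod ((V - 1) * I1 + \<i> * k_xi * k_E * I1 * I2) \<le> \<dots>" .
  hence "\<epsilon>^(3-j) * (cmod k_xi)^j * cmod ((V - 1) * I1 + \<i> * k_xi * k_E * I1 * I2)
     \<le> \<epsilon>^(3-j) * (cmod k_xi)^j * (cmod (V - 1) / Re (k_lam - k_Q) + cmod k_xi * cmod k_E / (Re (k_lam - k_Q) * Re (k_lam - k_Q0)))"
    using e0 by (intro mult_left_mono) auto
  thus ?thesis unfolding eq V_def .
qed


lemma xi2_u: "(cmod k_xi)^2 = cmod k_u" by (simp add: k_u_def norm_power)

lemma eta2: "k_eta^2 = \<epsilon>^2 * \<alpha>h^2" by (simp add: k_eta_def power_mult_distrib)

lemma small_region:
  assumes x2: "x^2 \<le> \<rho>" and r1: "\<rho> \<le> 1" and q: "k_eta^2 \<le> \<rho>" and n: "n \<le> 1" and j: "j \<le> 1"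
  shows "cmod (lhs_sym a b k_c k_lam \<epsilon> j n k_xi - lim_sym a b \<Lambda> j (k_xi / complex_of_real \<epsilon>))
    \<le> (\<epsilon>^2 + 2*\<epsilon>) * ((8*b^2/a) * (1+\<alpha>h^2) / (\<alpha>h * min ((1 - (b-a)*\<alpha>h^2)/8) ((b-a)/(2*(1+2*b)^2))))
      + (2*\<epsilon> + 2*\<rho>) * ((4*(1+b)^2) * (1+\<alpha>h^2)^2 / (\<alpha>h * min ((1 - (b-a)*\<alpha>h^2)/8) ((b-a)/(2*(1+2*b)^2)))^2)"
proof -
  define \<kappa>1 where "\<kappa>1 = (b-a)/(2*(1+2*b)^2)"
  define c3 where "c3 = min k_m \<kappa>1"
  define ss where "ss = \<epsilon>^2 + x^2"
  define A where "A = 1 + \<alpha>h^2"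
  have k10: "\<kappa>1 > 0" using ab a0 by (simp add: \<kappa>1_def)
  have c30: "c3 > 0" using m_pos k10 by (simp add: c3_def)
  have s0: "ss > 0" using e0 by (simp add: ss_def add_pos_nonneg)
  have c3m: "c3 \<le> k_m" and c3k: "c3 \<le> \<kappa>1" by (simp_all add: c3_def)
  have nu: "cmod k_u \<le> 2" using norm_u x2 q r1 by linarith
  have nu2: "cmod k_u \<le> 2*\<rho>" using norm_u x2 q by linarith
  have Dle: "cmod k_D \<le> 1 + 2*b" using norm_D_le nu ab a0 mult_left_mono[OF nu, of b] by linarith
  have G1: "k_G \<ge> \<kappa>1 * x^2"
  proof -
    have D2: "(cmod k_D)^2 \<le> (1+2*b)^2" using Dle by (intro power_mono) auto
    have bb: "(1+2*b)^2 > 0" using a0 ab by simp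
    have "\<kappa>1 * x^2 = (b-a)*(2*x^2)/(4*(1+2*b)^2)" unfolding \<kappa>1_def
      using bb by (simp add: divide_simps)
    also have "\<dots> \<le> (b-a)*(2*x^2)/(4*(cmod k_D)^2)"
      using D2 D2_pos ab bb by (intro divide_left_mono) (auto intro: mult_pos_pos)
    also have "\<dots> \<le> k_G" unfolding k_G_def using ab a0
      by (intro divide_right_mono mult_left_mono) auto
    finally show ?thesis .
  qed
  have Y1: "\<epsilon>*\<alpha>h*c3 * ss \<le> Re (k_lam - k_Q)"
  proof -
    have "c3 * ss \<le> \<epsilon>^2 * k_m + \<kappa>1 * x^2"
      unfolding ss_def using c3m c3k e0
      by (simp add: distrib_left mult.commute mult_right_mono add_mono)
    also have "\<dots> \<le> \<epsilon>^2 * k_m + k_G" using G1 by simp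
    finally have "k_eta * (c3 * ss) \<le> k_eta * (\<epsilon>^2 * k_m + k_G)" using eta_pos by (intro mult_left_mono) auto
    thus ?thesis using Re_lamQ by (simp add: k_eta_def mult.assoc)
  qed
  have Y2: "\<epsilon>*\<alpha>h*c3 * ss \<le> Re (k_lam - k_Q0)"
  proof -
    have "c3 \<le> 2 * k_m" using c3m m_pos by linarith
    moreover have "c3 \<le> 3/2 * (b-a)"
    proof -
      have "(1::real) \<le> 2*(1+2*b)^2" using ab a0 by (simp add: power2_eq_square algebra_simps)
      hence "\<kappa>1 \<le> (b-a)" using ab by (simp add: \<kappa>1_def divide_le_eq mult_le_cancel_left1)
      moreover have "b - a \<le> 3/2 * (b-a)" using ab by simp
      ultimately show ?thesis using c3k by linarith
    qed
    ultimately have h1: "c3*\<epsilon>^2 \<le> 2*k_m*\<epsilon>^2" and h2: "c3*x^2 \<le> 3/2*(b-a)*x^2"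
      by (intro mult_right_mono; simp)+
    have "c3 * ss = c3*\<epsilon>^2 + c3*x^2" by (simp add: ss_def distrib_left)
    hence "c3 * ss \<le> 2 * k_m * \<epsilon>^2 + 3/2 * (b-a) * x^2" using h1 h2 by linarith
    hence "k_eta * (c3 * ss) \<le> k_eta * (2 * k_m * \<epsilon>^2 + 3/2 * (b-a) * x^2)" using eta_pos by (intro mult_left_mono) auto
    thus ?thesis using Re_lamQ0 by (simp add: k_eta_def mult.assoc)
  qed
  have uA: "cmod k_u \<le> A * ss"
    unfolding norm_u eta2 A_def ss_def by (simp add: algebra_simps)
  have eA: "\<epsilon>^2 + cmod k_u \<le> A * ss"
    unfolding norm_u eta2 A_def ss_def by (simp add: algebra_simps)
  have Vb: "cmod ((inverse k_S)^n * inverse k_D - 1) \<le> (8*b^2/a) * A * ss"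
    using V_bound[OF n] mult_left_mono[OF uA, of "8*b^2/a"] a0 by (simp add: mult.assoc)
  have Eb: "cmod k_E \<le> (4*(1+b)^2) * (A * ss)^2"
  proof -
    have "(\<epsilon>^2 + cmod k_u)^2 \<le> (A * ss)^2" using eA by (intro power_mono) auto
    thus ?thesis using norm_E by (smt (verit) mult_left_mono zero_le_power2 mult_nonneg_nonneg)
  qed
  have r2: "(cmod k_xi)^2 \<le> 2*\<rho>" using xi2_u nu2 by simp
  have rle2: "cmod k_xi \<le> 2"
  proof -
    have "(cmod k_xi)^2 \<le> 2^2" using xi2_u nu by simp
    thus ?thesis by (rule power2_le_imp_le) simp
  qed
  have main: "\<epsilon>^(3-j) * (cmod k_xi)^j * (cmod ((inverse k_S)^n * inverse k_D - 1) / Re (k_lam - k_Q)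
      + cmod k_xi * cmod k_E / (Re (k_lam - k_Q) * Re (k_lam - k_Q0)))
      \<le> (\<epsilon>^2 + 2*\<epsilon>) * ((8*b^2/a)*A/(\<alpha>h*c3)) + (2*\<epsilon> + 2*\<rho>) * ((4*(1+b)^2)*A^2/(\<alpha>h*c3)^2)"
    by (rule small_real[OF e0 al0 c30 s0 _ _ _ j _ _ _ Y1 Y2 Vb Eb rle2 r2])
       (use a0 ab q in \<open>auto simp: A_def intro: order.trans[OF zero_le_power2]\<close>)
  have c3e: "c3 = min ((1 - (b-a)*\<alpha>h^2)/8) ((b-a)/(2*(1+2*b)^2))"
    by (simp add: c3_def k_m_def \<kappa>1_def)
  show ?thesis using order.trans[OF diff_bound[OF n j] main] unfolding c3e A_def by simp
qed


lemma large_region: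
  assumes x2: "\<rho> \<le> x^2" and r0: "0 < \<rho>" and r1: "\<rho> \<le> 1" and q: "k_eta^2 \<le> \<rho>" and n: "n \<le> 1" and j: "j \<le> 1"
  shows "cmod (lhs_sym a b k_c k_lam \<epsilon> j n k_xi - lim_sym a b \<Lambda> j (k_xi / complex_of_real \<epsilon>))
    \<le> (2*\<epsilon>^2 + (2 + 3/b)*\<epsilon>) * ((b/a) / (\<alpha>h * ((b-a)*(a+b)/(4*(1/\<rho> + 2*b)^2))))
      + (\<epsilon>^2/\<rho> + \<epsilon>*(1/\<rho> + 2)) * (1/(\<alpha>h * (3/2*(b-a))))"
proof -
  define \<kappa>2 where "\<kappa>2 = (b-a)*(a+b)/(4*(1/\<rho> + 2*b)^2)"
  define X where "X = x^2"
  have X0: "X > 0" using x2 r0 unfolding X_def by linarith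
  have k20: "\<kappa>2 > 0"
  proof -
    have "1/\<rho> + 2*b > 0" using a0 ab r0 by (simp add: add_pos_pos)
    thus ?thesis using a0 ab unfolding \<kappa>2_def by (intro divide_pos_pos mult_pos_pos) auto
  qed
  have uX: "cmod k_u \<le> 2*X" and uX2: "X \<le> cmod k_u" using norm_u q x2 by (simp_all add: X_def)
  have Dle: "cmod k_D \<le> (1/\<rho> + 2*b) * X"
  proof -
    have "cmod k_D \<le> 1 + b * (2*X)" using norm_D_le mult_left_mono[OF uX, of b] ab a0 by linarith
    also have "1 \<le> X/\<rho>" using x2 r0 by (simp add: X_def)
    hence "1 + b * (2*X) \<le> X/\<rho> + 2*b*X" by simp
    also have "\<dots> = (1/\<rho> + 2*b) * X" by (simp add: algebra_simps)
    finally show ?thesis .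
  qed
  have G2: "k_G \<ge> \<kappa>2"
  proof -
    have p: "0 < (1/\<rho> + 2*b)" using r0 ab a0 by (simp add: add_pos_pos)
    have "\<kappa>2 = (b-a)*(a+b)*X^2/(4*((1/\<rho> + 2*b)*X)^2)"
      unfolding \<kappa>2_def using X0 p by (simp add: power_mult_distrib)
    also have "\<dots> \<le> (b-a)*(a+b)*(cmod k_u)^2/(4*(cmod k_D)^2)"
    proof (rule frac_le)
      show "0 \<le> (b-a)*(a+b)*(cmod k_u)^2" using a0 ab by simp
      show "(b-a)*(a+b)*X^2 \<le> (b-a)*(a+b)*(cmod k_u)^2"
        using uX2 X0 a0 ab by (intro mult_left_mono power_mono) auto
      show "0 < 4*(cmod k_D)^2" using D2_pos by simp
      show "4*(cmod k_D)^2 \<le> 4*((1/\<rho> + 2*b)*X)^2" using Dle by (simp add: power_mono)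
    qed
    also have "\<dots> \<le> k_G"
    proof -
      have "(a+b)*(cmod k_u)^2 \<le> 2*x^2 + (a+b)*(cmod k_u)^2" by simp
      hence "(b-a)*((a+b)*(cmod k_u)^2) \<le> (b-a)*(2*x^2 + (a+b)*(cmod k_u)^2)" using ab by (intro mult_left_mono) auto
      thus ?thesis unfolding k_G_def by (intro divide_right_mono) (auto simp: mult.assoc)
    qed
    finally show ?thesis .
  qed
  have Y1: "\<epsilon>*\<alpha>h*\<kappa>2 \<le> Re (k_lam - k_Q)"
  proof -
    have "\<kappa>2 \<le> \<epsilon>^2 * k_m + k_G" using G2 m_pos by (simp add: add_increasing)
    hence "k_eta * \<kappa>2 \<le> k_eta * (\<epsilon>^2 * k_m + k_G)" using eta_pos by (intro mult_left_mono) auto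
    thus ?thesis using Re_lamQ by (simp add: k_eta_def mult.assoc)
  qed
  have Y2: "\<epsilon>*\<alpha>h*(3/2*(b-a))*X \<le> Re (k_lam - k_Q0)"
  proof -
    have "3/2*(b-a)*X \<le> 2 * k_m * \<epsilon>^2 + 3/2 * (b-a) * x^2" using m_pos by (simp add: X_def)
    hence h: "k_eta * (3/2*(b-a)*X) \<le> k_eta * (2 * k_m * \<epsilon>^2 + 3/2 * (b-a) * x^2)" using eta_pos by (intro mult_left_mono) auto
    have "\<epsilon>*\<alpha>h*(3/2*(b-a))*X = k_eta * (3/2*(b-a)*X)" by (simp add: k_eta_def mult.assoc)
    thus ?thesis using h Re_lamQ0 by linarith
  qed
  have rX: "cmod k_xi \<le> 1 + 2*X"
  proof -
    have h: "(cmod k_xi - 1/2)^2 = (cmod k_xi)^2 - cmod k_xi + 1/4" by (simp add: power2_eq_square field_simps)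
    have "cmod k_xi \<le> 1 + (cmod k_xi)^2" using h zero_le_power2[of "cmod k_xi - 1/2"] by linarith
    thus ?thesis using xi2_u uX by linarith
  qed
  have L1: "cmod (lhs_sym a b k_c k_lam \<epsilon> j n k_xi)
      \<le> \<epsilon>^(3-j) * (cmod k_xi)^j * (cmod ((inverse k_S)^n) / (cmod k_D * Re (k_lam - k_Q)))"
  proof -
    have "cmod (lhs_sym a b k_c k_lam \<epsilon> j n k_xi) = \<epsilon>^(3-j) * (cmod k_xi)^j * (cmod ((inverse k_S)^n) / cmod k_D * cmod (inverse (k_lam - k_Q)))"
      unfolding lhs_eq using e0 by (simp add: norm_mult norm_power norm_inverse divide_inverse del: power_inverse)
    also have "\<dots> \<le> \<epsilon>^(3-j) * (cmod k_xi)^j * (cmod ((inverse k_S)^n) / cmod k_D * (1 / Re (k_lam - k_Q)))"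
      using norm_inv_le[OF Y1_pos] e0 by (intro mult_left_mono) auto
    finally show ?thesis by simp
  qed
  have L2: "cmod (lim_sym a b \<Lambda> j (k_xi / complex_of_real \<epsilon>)) \<le> \<epsilon>^(3-j) * (cmod k_xi)^j / Re (k_lam - k_Q0)"
  proof -
    have "cmod (lim_sym a b \<Lambda> j (k_xi / complex_of_real \<epsilon>)) = \<epsilon>^(3-j) * (cmod k_xi)^j * cmod (inverse (k_lam - k_Q0))"
      unfolding lim_eq[OF j] using e0 by (simp add: norm_mult norm_power)
    also have "\<dots> \<le> \<epsilon>^(3-j) * (cmod k_xi)^j * (1 / Re (k_lam - k_Q0))"
      using norm_inv_le[OF Y2_pos] e0 by (intro mult_left_mono) auto
    finally show ?thesis by simp
  qed
  have B1: "\<epsilon>^(3-j) * (cmod k_xi)^j * (cmod ((inverse k_S)^n) / (cmod k_D * Re (k_lam - k_Q)))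
     \<le> (2*\<epsilon>^2 + (2 + 3/b)*\<epsilon>) * ((b/a) / (\<alpha>h * \<kappa>2))"
    by (rule large_lhs[OF e0 al0 k20 _ j norm_D_ge xi_le _ norm_Sinv[OF n] Y1]) auto
  have B2: "\<epsilon>^(3-j) * (cmod k_xi)^j / Re (k_lam - k_Q0) \<le> (\<epsilon>^2/\<rho> + \<epsilon>*(1/\<rho> + 2)) * (1/(\<alpha>h * (3/2*(b-a))))"
    by (rule large_lim[OF e0 al0 _ r0 _ _ rX j Y2]) (use ab x2 in \<open>auto simp: X_def\<close>)
  have "cmod (lhs_sym a b k_c k_lam \<epsilon> j n k_xi - lim_sym a b \<Lambda> j (k_xi / complex_of_real \<epsilon>))
     \<le> cmod (lhs_sym a b k_c k_lam \<epsilon> j n k_xi) + cmod (lim_sym a b \<Lambda> j (k_xi / complex_of_real \<epsilon>))"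
    by (rule norm_triangle_ineq4)
  also have "\<dots> \<le> (2*\<epsilon>^2 + (2 + 3/b)*\<epsilon>) * ((b/a) / (\<alpha>h * \<kappa>2)) + (\<epsilon>^2/\<rho> + \<epsilon>*(1/\<rho> + 2)) * (1/(\<alpha>h * (3/2*(b-a))))"
    using L1 L2 B1 B2 by linarith
  finally show ?thesis unfolding \<kappa>2_def .
qed


lemma region_bound:
  assumes r0: "0 < \<rho>" and r1: "\<rho> \<le> 1" and q: "(\<epsilon>*\<alpha>h)^2 \<le> \<rho>" and n: "n \<le> 1" and j: "j \<le> 1"
    and xk: "x = \<epsilon> * k"
  shows "cmod (lhs_sym a b (1 + \<epsilon>^2/2) (complex_of_real (\<epsilon>^3/2) * \<Lambda>) \<epsilon> j n
              (complex_of_real (\<epsilon>*k) + \<i> * complex_of_real (\<epsilon>*\<alpha>h))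
            - lim_sym a b \<Lambda> j (complex_of_real k + \<i> * complex_of_real \<alpha>h))
    \<le> max ((\<epsilon>^2 + 2*\<epsilon>) * ((8*b^2/a) * (1+\<alpha>h^2) / (\<alpha>h * min ((1 - (b-a)*\<alpha>h^2)/8) ((b-a)/(2*(1+2*b)^2))))
      + (2*\<epsilon> + 2*\<rho>) * ((4*(1+b)^2) * (1+\<alpha>h^2)^2 / (\<alpha>h * min ((1 - (b-a)*\<alpha>h^2)/8) ((b-a)/(2*(1+2*b)^2)))^2))
      ((2*\<epsilon>^2 + (2 + 3/b)*\<epsilon>) * ((b/a) / (\<alpha>h * ((b-a)*(a+b)/(4*(1/\<rho> + 2*b)^2))))
      + (\<epsilon>^2/\<rho> + \<epsilon>*(1/\<rho> + 2)) * (1/(\<alpha>h * (3/2*(b-a)))))"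
proof -
  have q': "k_eta^2 \<le> \<rho>" using q by (simp add: k_eta_def)
  have R1: "Re k_xi = \<epsilon>*k" "Im k_xi = \<epsilon>*\<alpha>h" using Re_xi Im_xi xk by (simp_all add: k_eta_def)
  have xi: "complex_of_real (\<epsilon>*k) + \<i> * complex_of_real (\<epsilon>*\<alpha>h) = k_xi"
    using R1 by (simp add: complex_eq_iff)
  have zeta: "complex_of_real k + \<i> * complex_of_real \<alpha>h = k_xi / complex_of_real \<epsilon>"
    using e0 R1 by (simp add: complex_eq_iff)
  have c: "1 + \<epsilon>^2/2 = k_c" by (simp add: k_c_def)
  have l: "complex_of_real (\<epsilon>^3/2) * \<Lambda> = k_lam" by (simp add: k_lam_def)
  show ?thesis
  proof (cases "x^2 \<le> \<rho>")
    case True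
    show ?thesis unfolding xi zeta c l using small_region[OF True r1 q' n j] by (rule order.trans) simp
  next
    case False
    hence "\<rho> \<le> x^2" by simp
    show ?thesis unfolding xi zeta c l using large_region[OF \<open>\<rho> \<le> x^2\<close> r0 r1 q' n j] by (rule order.trans) simp
  qed
qed

end


lemma op_norm_mult_le:
  fixes f :: "real \<Rightarrow> complex"
  assumes fb: "\<And>k. cmod (f k) \<le> M" and M0: "0 \<le> M"
  shows "op_norm (\<lambda>h k. f k * h k) \<le> ennreal M"
  unfolding op_norm_def
proof (rule SUP_least)
  fix h assume "h \<in> {h \<in> L2space. l2norm h \<noteq> 0}"
  hence hm: "h \<in> borel_measurable lborel" and hf: "l2norm h < \<infinity>" and h0: "l2norm h \<noteq> 0"
    by (auto simp: L2space_def)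
  define I where "I = (\<integral>\<^sup>+ x. ennreal ((cmod (h x))\<^sup>2) \<partial>lborel)"
  define J where "J = (\<integral>\<^sup>+ x. ennreal ((cmod (f x * h x))\<^sup>2) \<partial>lborel)"
  have IT: "I \<noteq> \<infinity>" using hf by (auto simp: l2norm_def I_def[symmetric] Let_def split: if_splits)
  have lh: "l2norm h = ennreal (sqrt (enn2real I))" using IT by (simp add: l2norm_def I_def[symmetric] Let_def)
  have meas: "(\<lambda>x. ennreal ((cmod (h x))\<^sup>2)) \<in> borel_measurable lborel" using hm by measurable
  have "J \<le> (\<integral>\<^sup>+ x. ennreal (M\<^sup>2) * ennreal ((cmod (h x))\<^sup>2) \<partial>lborel)"
    unfolding J_def
  proof (rule nn_integral_mono)
    fix x
    have "(cmod (f x * h x))\<^sup>2 \<le> M\<^sup>2 * (cmod (h x))\<^sup>2"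
      by (simp add: norm_mult power_mult_distrib mult_right_mono power_mono fb)
    thus "ennreal ((cmod (f x * h x))\<^sup>2) \<le> ennreal (M\<^sup>2) * ennreal ((cmod (h x))\<^sup>2)"
      by (simp add: ennreal_mult[symmetric])
  qed
  also have "\<dots> = ennreal (M\<^sup>2) * I" unfolding I_def by (rule nn_integral_cmult[OF meas])
  finally have JI: "J \<le> ennreal (M\<^sup>2) * I" .
  have JT: "J \<noteq> \<infinity>" using JI IT by (metis ennreal_mult_eq_top_iff ennreal_neq_top infinity_ennreal_def neq_top_trans)
  have lfh: "l2norm (\<lambda>k. f k * h k) = ennreal (sqrt (enn2real J))"
    using JT by (simp add: l2norm_def J_def[symmetric] Let_def)
  have "enn2real J \<le> enn2real (ennreal (M\<^sup>2) * I)"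
    using JI IT by (intro enn2real_mono) (auto simp: ennreal_mult_less_top top.not_eq_extremum)
  hence JI': "enn2real J \<le> M\<^sup>2 * enn2real I" by (simp add: enn2real_mult)
  have sI: "sqrt (enn2real I) > 0" using h0 lh enn2real_nonneg[of I] by (auto simp del: enn2real_nonneg)
  have "sqrt (enn2real J) \<le> sqrt (M\<^sup>2 * enn2real I)" using JI' by simp
  also have "\<dots> = M * sqrt (enn2real I)" using M0 by (simp add: real_sqrt_mult)
  finally have sJ: "sqrt (enn2real J) \<le> M * sqrt (enn2real I)" .
  show "l2norm (\<lambda>k. f k * h k) / l2norm h \<le> ennreal M"
    unfolding lfh lh using sI sJ
    by (subst divide_ennreal) (auto intro!: ennreal_leI simp: pos_divide_le_eq)
qed



lemma small_mul: fixes \<epsilon> t P :: real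
  assumes "0 < \<epsilon>" "\<epsilon> < t / (P + 1)" "0 \<le> P"
  shows "P * \<epsilon> \<le> t"
proof -
  have "\<epsilon> * (P + 1) < t" using assms by (simp add: less_divide_eq add_nonneg_pos)
  thus ?thesis using assms by (simp add: algebra_simps)
qed

lemma final_arith: fixes \<epsilon> \<rho> K1 K2 K3 K4 C3 e :: real
  assumes e: "0 < \<epsilon>" "\<epsilon> \<le> 1" "0 < \<rho>" "0 \<le> K1" "0 \<le> K2" "0 \<le> K3" "0 \<le> K4" "0 \<le> C3"
    and r: "2*\<rho>*K2 \<le> e/8"
    and M: "\<epsilon>*(3*K1 + 2*K2 + (2+C3)*K3 + (2/\<rho>+2)*K4) \<le> e/4"
  shows "max ((\<epsilon>^2 + 2*\<epsilon>) * K1 + (2*\<epsilon> + 2*\<rho>) * K2)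
             ((2*\<epsilon>^2 + C3*\<epsilon>) * K3 + (\<epsilon>^2/\<rho> + \<epsilon>*(1/\<rho> + 2)) * K4) \<le> e/2"
proof -
  have ee: "\<epsilon>^2 \<le> \<epsilon>" using e by (simp add: power2_eq_square mult_left_le)
  have A1: "(\<epsilon>^2 + 2*\<epsilon>) * K1 \<le> (3*\<epsilon>) * K1" using ee e by (intro mult_right_mono) auto
  have A2: "(2*\<epsilon>^2 + C3*\<epsilon>) * K3 \<le> (\<epsilon>*(2+C3)) * K3" using ee e by (intro mult_right_mono) (auto simp: algebra_simps)
  have B1: "\<epsilon>^2/\<rho> \<le> \<epsilon>/\<rho>" using ee e by (intro divide_right_mono) auto
  have B2: "\<epsilon>*(1/\<rho>+2) = \<epsilon>/\<rho> + 2*\<epsilon>" by (simp add: algebra_simps)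
  have B3: "\<epsilon>*(2/\<rho>+2) = 2*(\<epsilon>/\<rho>) + 2*\<epsilon>" by (simp add: algebra_simps)
  have "\<epsilon>^2/\<rho> + \<epsilon>*(1/\<rho> + 2) \<le> \<epsilon>*(2/\<rho>+2)" unfolding B2 B3 using B1 by linarith
  hence A3: "(\<epsilon>^2/\<rho> + \<epsilon>*(1/\<rho> + 2)) * K4 \<le> (\<epsilon>*(2/\<rho>+2)) * K4" using e by (intro mult_right_mono) auto
  have E1: "(2*\<epsilon> + 2*\<rho>) * K2 = 2*\<epsilon>*K2 + 2*\<rho>*K2" by (simp add: algebra_simps)
  have E2: "\<epsilon>*(3*K1 + 2*K2 + (2+C3)*K3 + (2/\<rho>+2)*K4) = 3*\<epsilon>*K1 + 2*\<epsilon>*K2 + \<epsilon>*(2+C3)*K3 + \<epsilon>*(2/\<rho>+2)*K4"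
    by (simp add: algebra_simps)
  have N: "0 \<le> \<epsilon>*(2+C3)*K3" "0 \<le> \<epsilon>*(2/\<rho>+2)*K4" "0 \<le> 3*\<epsilon>*K1" "0 \<le> 2*\<epsilon>*K2" using e by auto
  have S: "(\<epsilon>^2 + 2*\<epsilon>) * K1 + (2*\<epsilon> + 2*\<rho>) * K2 \<le> e/2" using A1 E1 E2 N r M by linarith
  have L: "(2*\<epsilon>^2 + C3*\<epsilon>) * K3 + (\<epsilon>^2/\<rho> + \<epsilon>*(1/\<rho> + 2)) * K4 \<le> e/2" using A2 A3 E2 N r M by linarith
  show ?thesis using S L by (rule max.boundedI)
qed

lemma op_eq:
  fixes \<epsilon> \<alpha>h :: real and m L :: "complex \<Rightarrow> complex"
  assumes "0 < \<epsilon>"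
  shows "(\<lambda>h k. I_eps_inv \<epsilon> (mult_op (\<epsilon> * \<alpha>h) m (I_eps \<epsilon> h)) k - mult_op \<alpha>h L h k)
    = (\<lambda>h k. (m (complex_of_real (\<epsilon>*k) + \<i> * complex_of_real (\<epsilon>*\<alpha>h))
               - L (complex_of_real k + \<i> * complex_of_real \<alpha>h)) * h k)"
  using assms by (auto simp: fun_eq_iff I_eps_inv_def I_eps_def mult_op_def algebra_simps)

theorem lemma7p3:
  fixes a b \<alpha>h :: real and j n :: nat
  assumes "0 < a" and "a < b"
    and "0 < \<alpha>h" and "\<alpha>h < 1 / sqrt (b - a)"
    and "j \<le> 1" and "n \<le> 1"
  shows "\<forall>e>0. \<exists>\<delta>>0. \<forall>\<epsilon> \<Lambda>. 0 < \<epsilon> \<and> \<epsilon> < \<delta>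
           \<and> Re \<Lambda> \<ge> - (\<alpha>h * (1 - (b - a) * \<alpha>h\<^sup>2)) / 2 \<longrightarrow>
           op_norm (\<lambda>h k.
              I_eps_inv \<epsilon> (mult_op (\<epsilon> * \<alpha>h)
                 (lhs_sym a b (1 + \<epsilon>\<^sup>2 / 2) (of_real (\<epsilon> ^ 3 / 2) * \<Lambda>) \<epsilon> j n) (I_eps \<epsilon> h)) k
              - mult_op \<alpha>h (lim_sym a b \<Lambda> j) h k) < ennreal e"
proof (intro allI impI)
  fix e :: real assume e0: "e > 0"
  note a0 = \<open>0 < a\<close> and ab = \<open>a < b\<close> and al0 = \<open>0 < \<alpha>h\<close> and j = \<open>j \<le> 1\<close> and n = \<open>n \<le> 1\<close>
  have kk: "(b - a) * \<alpha>h^2 < 1"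
  proof -
    have s0: "sqrt (b-a) > 0" using ab by simp
    have "\<alpha>h * sqrt (b-a) < 1" using \<open>\<alpha>h < 1 / sqrt (b - a)\<close> s0 by (simp add: less_divide_eq)
    hence "(\<alpha>h * sqrt (b-a))^2 < 1^2" using al0 s0 by (intro power_strict_mono) auto
    thus ?thesis using ab by (simp add: power_mult_distrib mult.commute)
  qed
  define c3 where "c3 = min ((1 - (b-a)*\<alpha>h^2)/8) ((b-a)/(2*(1+2*b)^2))"
  define K1 where "K1 = (8*b^2/a) * (1+\<alpha>h^2) / (\<alpha>h * c3)"
  define K2 where "K2 = (4*(1+b)^2) * (1+\<alpha>h^2)^2 / (\<alpha>h * c3)^2"
  define \<rho> where "\<rho> = min 1 (e/(16*(K2+1)))"
  define K3 where "K3 = (b/a) / (\<alpha>h * ((b-a)*(a+b)/(4*(1/\<rho> + 2*b)^2)))"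
  define K4 where "K4 = 1/(\<alpha>h * (3/2*(b-a)))"
  define C3 where "C3 = 2 + 3/b"
  define M where "M = 3*K1 + 2*K2 + (2+C3)*K3 + (2/\<rho>+2)*K4"
  define P1 where "P1 = 4*b*\<alpha>h^2"
  define P2 where "P2 = 32*b*(b-a)*\<alpha>h^4"
  define \<delta> where "\<delta> = min (min 1 (e/(4*(M+1)))) (min (1/4/(P1+1)) (min ((1 - (b-a)*\<alpha>h^2)/(P2+1)) (\<rho>/(\<alpha>h^2+1))))"
  have c30: "c3 > 0" using kk a0 ab by (simp add: c3_def)
  have K10: "K1 \<ge> 0" using c30 a0 al0 by (simp add: K1_def)
  have K20: "K2 \<ge> 0" using c30 a0 al0 by (simp add: K2_def)
  have r0: "\<rho> > 0" using e0 K20 by (simp add: \<rho>_def add_nonneg_pos)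
  have r1: "\<rho> \<le> 1" by (simp add: \<rho>_def)
  have K30: "K3 \<ge> 0"
  proof -
    have "1/\<rho> + 2*b > 0" using r0 a0 ab by (simp add: add_pos_pos)
    thus ?thesis using a0 ab al0 unfolding K3_def by (intro divide_nonneg_pos mult_pos_pos divide_pos_pos) auto
  qed
  have K40: "K4 \<ge> 0" using al0 ab by (simp add: K4_def)
  have C30: "C3 \<ge> 0" using a0 ab by (simp add: C3_def)
  have M0: "M \<ge> 0" using K10 K20 K30 K40 C30 r0 by (simp add: M_def)
  have P10: "P1 \<ge> 0" using a0 ab by (simp add: P1_def)
  have P20: "P2 \<ge> 0" using a0 ab by (simp add: P2_def)
  have rK2: "2*\<rho>*K2 \<le> e/8"
  proof -
    have "\<rho> \<le> e/(16*(K2+1))" by (simp add: \<rho>_def)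
    hence "2*\<rho>*K2 \<le> 2*(e/(16*(K2+1)))*K2" using K20 by (intro mult_right_mono) auto
    also have "\<dots> = e/8 * (K2/(K2+1))" using K20 by (simp add: field_simps)
    also have "\<dots> \<le> e/8 * 1" using K20 e0 by (intro mult_left_mono) auto
    finally show ?thesis by simp
  qed
  show "\<exists>\<delta>>0. \<forall>\<epsilon> \<Lambda>. 0 < \<epsilon> \<and> \<epsilon> < \<delta>
           \<and> Re \<Lambda> \<ge> - (\<alpha>h * (1 - (b - a) * \<alpha>h\<^sup>2)) / 2 \<longrightarrow>
           op_norm (\<lambda>h k.
              I_eps_inv \<epsilon> (mult_op (\<epsilon> * \<alpha>h)
                 (lhs_sym a b (1 + \<epsilon>\<^sup>2 / 2) (of_real (\<epsilon> ^ 3 / 2) * \<Lambda>) \<epsilon> j n) (I_eps \<epsilon> h)) k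
              - mult_op \<alpha>h (lim_sym a b \<Lambda> j) h k) < ennreal e"
  proof (intro exI conjI allI impI)
    show "\<delta> > 0" unfolding \<delta>_def using e0 M0 P10 P20 kk r0 al0
      by (auto intro!: divide_pos_pos add_nonneg_pos)
    fix \<epsilon> :: real and \<Lambda> :: complex
    assume H: "0 < \<epsilon> \<and> \<epsilon> < \<delta> \<and> Re \<Lambda> \<ge> - (\<alpha>h * (1 - (b - a) * \<alpha>h\<^sup>2)) / 2"
    hence ep: "0 < \<epsilon>" and ed: "\<epsilon> < \<delta>" and ReL: "Re \<Lambda> \<ge> - (\<alpha>h * (1 - (b - a) * \<alpha>h\<^sup>2)) / 2" by auto
    have e1: "\<epsilon> \<le> 1" using ed by (simp add: \<delta>_def)
    have eM: "\<epsilon> < e/4/(M+1)" using ed by (simp add: \<delta>_def)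
    have eP1: "\<epsilon> < 1/4/(P1+1)" using ed by (simp add: \<delta>_def)
    have eP2: "\<epsilon> < (1 - (b-a)*\<alpha>h^2)/(P2+1)" using ed by (simp add: \<delta>_def)
    have eq: "\<epsilon> < \<rho>/(\<alpha>h^2+1)" using ed by (simp add: \<delta>_def)
    have sq: "(\<epsilon>*\<alpha>h)^2 \<le> \<epsilon>*\<alpha>h^2"
    proof -
      have "\<epsilon>^2 \<le> \<epsilon>" using ep e1 by (simp add: power2_eq_square mult_left_le)
      thus ?thesis by (simp add: power_mult_distrib mult_right_mono)
    qed
    have sm1: "b * (\<epsilon>*\<alpha>h)^2 \<le> 1/4"
    proof -
      have "b * (\<epsilon>*\<alpha>h)^2 \<le> b * (\<epsilon>*\<alpha>h^2)" using sq a0 ab by (intro mult_left_mono) auto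
      also have "\<dots> \<le> 1/4" using small_mul[OF ep eP1 P10] by (simp add: P1_def algebra_simps)
      finally show ?thesis .
    qed
    have sm2: "32 * b * (b-a) * \<alpha>h^2 * (\<epsilon>*\<alpha>h)^2 \<le> 1 - (b-a)*\<alpha>h^2"
    proof -
      have "32 * b * (b-a) * \<alpha>h^2 * (\<epsilon>*\<alpha>h)^2 \<le> 32 * b * (b-a) * \<alpha>h^2 * (\<epsilon>*\<alpha>h^2)"
        using sq a0 ab by (intro mult_left_mono) auto
      also have "\<dots> = P2 * \<epsilon>" by (simp add: P2_def power2_eq_square power4_eq_xxxx)
      also have "\<dots> \<le> 1 - (b-a)*\<alpha>h^2" using small_mul[OF ep eP2 P20] .
      finally show ?thesis .
    qed
    have qr: "(\<epsilon>*\<alpha>h)^2 \<le> \<rho>"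
    proof -
      have "\<alpha>h^2 * \<epsilon> \<le> \<rho>" using small_mul[OF ep eq] by simp
      thus ?thesis using sq by (simp add: mult.commute)
    qed
    have eM': "\<epsilon> * M \<le> e/4" using small_mul[OF ep eM M0] by (simp add: mult.commute)
    have fb: "cmod (lhs_sym a b (1 + \<epsilon>^2/2) (complex_of_real (\<epsilon>^3/2) * \<Lambda>) \<epsilon> j n
              (complex_of_real (\<epsilon>*k) + \<i> * complex_of_real (\<epsilon>*\<alpha>h))
            - lim_sym a b \<Lambda> j (complex_of_real k + \<i> * complex_of_real \<alpha>h)) \<le> e/2" for k
    proof -
      note RB = region_bound[OF a0 ab al0 kk ep sm1 sm2 ReL r0 r1 qr n j refl, of k]
      have RB': "cmod (lhs_sym a b (1 + \<epsilon>^2/2) (complex_of_real (\<epsilon>^3/2) * \<Lambda>) \<epsilon> j n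
              (complex_of_real (\<epsilon>*k) + \<i> * complex_of_real (\<epsilon>*\<alpha>h))
            - lim_sym a b \<Lambda> j (complex_of_real k + \<i> * complex_of_real \<alpha>h))
         \<le> max ((\<epsilon>^2 + 2*\<epsilon>) * K1 + (2*\<epsilon> + 2*\<rho>) * K2)
             ((2*\<epsilon>^2 + C3*\<epsilon>) * K3 + (\<epsilon>^2/\<rho> + \<epsilon>*(1/\<rho> + 2)) * K4)"
        using RB unfolding K1_def K2_def K3_def K4_def C3_def c3_def .
      have "max ((\<epsilon>^2 + 2*\<epsilon>) * K1 + (2*\<epsilon> + 2*\<rho>) * K2)
             ((2*\<epsilon>^2 + C3*\<epsilon>) * K3 + (\<epsilon>^2/\<rho> + \<epsilon>*(1/\<rho> + 2)) * K4) \<le> e/2"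
        by (rule final_arith[OF ep e1 r0 K10 K20 K30 K40 C30 rK2]) (use eM' in \<open>simp add: M_def\<close>)
      thus ?thesis using RB' by linarith
    qed
    have "op_norm (\<lambda>h k.
              I_eps_inv \<epsilon> (mult_op (\<epsilon> * \<alpha>h)
                 (lhs_sym a b (1 + \<epsilon>\<^sup>2 / 2) (of_real (\<epsilon> ^ 3 / 2) * \<Lambda>) \<epsilon> j n) (I_eps \<epsilon> h)) k
              - mult_op \<alpha>h (lim_sym a b \<Lambda> j) h k) \<le> ennreal (e/2)"
      unfolding op_eq[OF ep] using fb e0 by (intro op_norm_mult_le) auto
    also have "\<dots> < ennreal e" using e0 by (simp add: ennreal_lessI)
    finally show "op_norm (\<lambda>h k.
              I_eps_inv \<epsilon> (mult_op (\<epsilon> * \<alpha>h)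
                 (lhs_sym a b (1 + \<epsilon>\<^sup>2 / 2) (of_real (\<epsilon> ^ 3 / 2) * \<Lambda>) \<epsilon> j n) (I_eps \<epsilon> h)) k
              - mult_op \<alpha>h (lim_sym a b \<Lambda> j) h k) < ennreal e" .
  qed
qed


end
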